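(* Let $\mathbf G$ be a connected reductive complex algebraic group with split real form $G=\mathbf G^\sigma$ (identity component $G_0$), let $\mathbf X$ be a strict wonderful $\mathbf G$-variety of rank $r$ with real locus $X$, and let $P=P^uL$, $T$, $Z\cong\mathbb R^r$, the spherical roots $\gamma_1,\dots,\gamma_r$, and the charts $(U_g,\phi_g^{-1})$, $g\in G_0$, be as described in the context. For $x\in U_g$ let $z_j(x)$ denote the $(s+j)$-th component of $\phi_g^{-1}(x)\in\mathbb R^{s+r}$, and for $h\in G_0$ with $h\cdot x\in U_g$ let $\chi_j(h,x)$ be defined by $z_j(h\cdot x)=\chi_j(h,x)z_j(x)$. Then for any $g\in G_0$, $t\in T$, $u\in P^u$, $x\in U_g$ and $j=1,\dots,r$: (a) $z_j(gtg^{-1}\cdot x)=\chi_j(gtg^{-1},x)\,z_j(x)=\gamma_j(t)\,z_j(x)$; (b) $z_j(gug^{-1}\cdot x)=z_j(x)$.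
   Context: Let $\mathbf G$ be a connected reductive complex algebraic group, $\sigma$ an anti-holomorphic involution of $\mathbf G$ defining a split real form $G=\mathbf G^\sigma=\{g\in\mathbf G:\sigma(g)=g\}$, and $G_0$ the identity component of $G$. Fix a $\sigma$-stable maximal torus $\mathbf T$ and a $\sigma$-stable Borel subgroup $\mathbf B\supset\mathbf T$; put $T=\mathbf T^\sigma$, $B=\mathbf B^\sigma$. A $\mathbf G$-variety $\mathbf X$ is wonderful of rank $r$ if it is smooth projective, has an open $\mathbf G$-orbit whose complement is a union of smooth prime divisors $\mathbf X_1,\dots,\mathbf X_r$ with normal crossings, and the $\mathbf G$-orbit closures are exactly the partial intersections of the $\mathbf X_i$; it is strict if all its points have self-normalizing stabilizers. A strict wonderful $\mathbf G$-variety carries a unique $\sigma$-equivariant real structure $\mu$ (an anti-holomorphic involution with $\mu(g\cdot x)=\sigma(g)\cdot\mu(x)$); its real locus $X$ is a nonempty smooth projective real algebraic $G_0$-variety with a unique closed $G_0$-orbit $Y$. Let $P\supset B$ be the standard parabolic subgroup with $Y\cong G_0/P_0$, and $P=P^uL$ its Levi decomposition with $T\subset L$; $P^u$ is connected and diffeomorphic to $\mathbb R^s$, with coordinates $p_1,\dots,p_s$. By the local structure theorem of Akhiezer–Cupit-Foutou there is a real algebraic $L$-subvariety $Z\subset X$ such that $P^u\times Z\to P^u\cdot Z$, $(p,z)\mapsto p\cdot z$, is a $P^u$-equivariant isomorphism onto an open subset of $X$, every $G_0$-orbit meets $Z$, the commutator $(L,L)$ acts trivially on $Z$, and $Z\cong\mathbb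 R^r$ (coordinates $z_1,\dots,z_r$) with $T$ acting by $t\cdot z=(\gamma_1(t)z_1,\dots,\gamma_r(t)z_r)$ for linearly independent characters $\gamma_1,\dots,\gamma_r$ of $T$ (the spherical roots). $L$ acts on $P^u\cdot Z$ by $l\cdot(p_u\cdot z)=(lp_ul^{-1})\cdot(l\cdot z)$. Let $\phi:\mathbb R^{s+r}\to P^u\cdot Z$ be the real-analytic diffeomorphism $(p_1,\dots,p_s,z_1,\dots,z_r)\mapsto p\cdot z$, and for $g\in G_0$ set $U_g=g\cdot(P^u\cdot Z)$ and $\phi_g=g\circ\phi:\mathbb R^{s+r}\to U_g$. *)

theory Defs
  imports "HOL-Analysis.Analysis" "HOL-Algebra.Group"
begin

text \<open>Real coordinate space R^n, represented by functions nat => real vanishing from index n on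
  (coordinates are indexed 0,...,n-1).\<close>
definition vecs :: "nat \<Rightarrow> (nat \<Rightarrow> real) set" where
  "vecs n = {v. \<forall>i\<ge>n. v i = 0}"

definition chart :: "('g \<Rightarrow> 'x \<Rightarrow> 'x) \<Rightarrow> ((nat \<Rightarrow> real) \<Rightarrow> 'g) \<Rightarrow> ((nat \<Rightarrow> real) \<Rightarrow> 'x)
    \<Rightarrow> nat \<Rightarrow> nat \<Rightarrow> 'g \<Rightarrow> (nat \<Rightarrow> real) \<Rightarrow> 'x" where
  "chart act pu_of z_of s r g v =
     act g (act (pu_of (\<lambda>i. if i < s then v i else 0)) (z_of (\<lambda>j. if j < r then v (s + j) else 0)))"

definition chart_dom :: "('g \<Rightarrow> 'x \<Rightarrow> 'x) \<Rightarrow> ((nat \<Rightarrow> real) \<Rightarrow> 'g) \<Rightarrow> ((nat \<Rightarrow> real) \<Rightarrow> 'x)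
    \<Rightarrow> nat \<Rightarrow> nat \<Rightarrow> 'g \<Rightarrow> 'x set" where
  "chart_dom act pu_of z_of s r g = chart act pu_of z_of s r g ` vecs (s + r)"

text \<open>z_j(x): the (s+j)-th component of phi_g^{-1}(x) (0-based j, so j < r).\<close>
definition zc :: "('g \<Rightarrow> 'x \<Rightarrow> 'x) \<Rightarrow> ((nat \<Rightarrow> real) \<Rightarrow> 'g) \<Rightarrow> ((nat \<Rightarrow> real) \<Rightarrow> 'x)
    \<Rightarrow> nat \<Rightarrow> nat \<Rightarrow> 'g \<Rightarrow> nat \<Rightarrow> 'x \<Rightarrow> real" where
  "zc act pu_of z_of s r g j x =
     the_inv_into (vecs (s + r)) (chart act pu_of z_of s r g) x (s + j)"

definition chi :: "('g \<Rightarrow> 'x \<Rightarrow> 'x) \<Rightarrow> ((nat \<Rightarrow> real) \<Rightarrow> 'g) \<Rightarrow> ((nat \<Rightarrow> real) \<Rightarrow> 'x)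
    \<Rightarrow> nat \<Rightarrow> nat \<Rightarrow> 'g \<Rightarrow> nat \<Rightarrow> 'g \<Rightarrow> 'x \<Rightarrow> real" where
  "chi act pu_of z_of s r g j h x =
     zc act pu_of z_of s r g j (act h x) / zc act pu_of z_of s r g j x"

definition group_act :: "('g, 'b) monoid_scheme \<Rightarrow> 'x set \<Rightarrow> ('g \<Rightarrow> 'x \<Rightarrow> 'x) \<Rightarrow> bool" where
  "group_act G X act \<longleftrightarrow> group G \<and>
     (\<forall>g\<in>carrier G. \<forall>x\<in>X. act g x \<in> X) \<and>
     (\<forall>x\<in>X. act \<one>\<^bsub>G\<^esub> x = x) \<and>
     (\<forall>g\<in>carrier G. \<forall>h\<in>carrier G. \<forall>x\<in>X. act (g \<otimes>\<^bsub>G\<^esub> h) x = act g (act h x))"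

text \<open>The data of the local structure theorem (Akhiezer--Cupit-Foutou), as listed in the context.\<close>
definition local_structure ::
  "('g, 'b) monoid_scheme \<Rightarrow> 'g set \<Rightarrow> 'g set \<Rightarrow> 'g set \<Rightarrow> 'g set \<Rightarrow> 'x::topological_space set
   \<Rightarrow> ('g \<Rightarrow> 'x \<Rightarrow> 'x) \<Rightarrow> nat \<Rightarrow> nat \<Rightarrow> ((nat \<Rightarrow> real) \<Rightarrow> 'g) \<Rightarrow> ((nat \<Rightarrow> real) \<Rightarrow> 'x)
   \<Rightarrow> (nat \<Rightarrow> 'g \<Rightarrow> real) \<Rightarrow> bool" where
  "local_structure G G0 T L Pu X act s r pu_of z_of \<gamma> \<longleftrightarrow>
     group_act G X act \<and>
     subgroup G0 G \<and> subgroup T G \<and> subgroup L G \<and> subgroup Pu G \<and>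
     T \<subseteq> L \<and>
     (\<forall>l\<in>L. \<forall>u\<in>Pu. l \<otimes>\<^bsub>G\<^esub> u \<otimes>\<^bsub>G\<^esub> inv\<^bsub>G\<^esub> l \<in> Pu) \<and>
     bij_betw pu_of (vecs s) Pu \<and>
     bij_betw z_of (vecs r) (z_of ` vecs r) \<and>
     z_of ` vecs r \<subseteq> X \<and>
     inj_on (\<lambda>(p, z). act p z) (Pu \<times> z_of ` vecs r) \<and>
     openin (top_of_set X) ((\<lambda>(p, z). act p z) ` (Pu \<times> z_of ` vecs r)) \<and>
     (\<forall>l\<in>L. \<forall>z\<in>z_of ` vecs r. act l z \<in> z_of ` vecs r) \<and>
     (\<forall>x\<in>X. \<exists>g\<in>G0. act g x \<in> z_of ` vecs r) \<and>
     (\<forall>a\<in>L. \<forall>b\<in>L. \<forall>z\<in>z_of ` vecs r.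
        act (a \<otimes>\<^bsub>G\<^esub> b \<otimes>\<^bsub>G\<^esub> inv\<^bsub>G\<^esub> a \<otimes>\<^bsub>G\<^esub> inv\<^bsub>G\<^esub> b) z = z) \<and>
     (\<forall>j<r. \<forall>t\<in>T. \<gamma> j t \<noteq> 0) \<and>
     (\<forall>j<r. \<forall>t1\<in>T. \<forall>t2\<in>T. \<gamma> j (t1 \<otimes>\<^bsub>G\<^esub> t2) = \<gamma> j t1 * \<gamma> j t2) \<and>
     (\<forall>n::nat \<Rightarrow> int. (\<forall>t\<in>T. (\<Prod>j<r. \<gamma> j t powi n j) = 1) \<longrightarrow> (\<forall>j<r. n j = 0)) \<and>
     (\<forall>t\<in>T. \<forall>v\<in>vecs r. act t (z_of v) = z_of (\<lambda>j. if j < r then \<gamma> j t * v j else 0))"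

end

theory Submission
  imports Defs
begin

definition comb :: "nat \<Rightarrow> nat \<Rightarrow> (nat \<Rightarrow> real) \<Rightarrow> (nat \<Rightarrow> real) \<Rightarrow> nat \<Rightarrow> real" where
  "comb s r p w = (\<lambda>i. if i < s then p i else if i < s + r then w (i - s) else 0)"

lemma comb_vecs: "comb s r p w \<in> vecs (s + r)"
  by (simp add: comb_def vecs_def)

lemma comb_p: "p \<in> vecs s \<Longrightarrow> (\<lambda>i. if i < s then comb s r p w i else 0) = p"
  by (rule ext) (auto simp: comb_def vecs_def)

lemma comb_w: "w \<in> vecs r \<Longrightarrow> (\<lambda>j. if j < r then comb s r p w (s + j) else 0) = w"
  by (rule ext) (auto simp: comb_def vecs_def)

lemma comb_j: "j < r \<Longrightarrow> comb s r p w (s + j) = w j"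
  by (simp add: comb_def)

lemma chart_comb: "p \<in> vecs s \<Longrightarrow> w \<in> vecs r \<Longrightarrow>
  chart act pu_of z_of s r g (comb s r p w) = act g (act (pu_of p) (z_of w))"
  by (simp add: chart_def comb_p comb_w)

lemma vecs_decomp: "v \<in> vecs (s + r) \<Longrightarrow>
   v = comb s r (\<lambda>i. if i < s then v i else 0) (\<lambda>j. if j < r then v (s + j) else 0)
   \<and> (\<lambda>i. if i < s then v i else 0) \<in> vecs s \<and> (\<lambda>j. if j < r then v (s + j) else 0) \<in> vecs r"
  by (auto simp: comb_def vecs_def intro!: ext)

theorem corollary4:
  fixes G :: "('g, 'b) monoid_scheme" and G0 T L Pu :: "'g set"
    and X :: "'x::topological_space set" and act :: "'g \<Rightarrow> 'x \<Rightarrow> 'x"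
    and s r :: nat and pu_of :: "(nat \<Rightarrow> real) \<Rightarrow> 'g" and z_of :: "(nat \<Rightarrow> real) \<Rightarrow> 'x"
    and \<gamma> :: "nat \<Rightarrow> 'g \<Rightarrow> real"
  assumes LS: "local_structure G G0 T L Pu X act s r pu_of z_of \<gamma>"
    and g: "g \<in> G0" and t: "t \<in> T" and u: "u \<in> Pu"
    and x: "x \<in> chart_dom act pu_of z_of s r g" and j: "j < r"
  shows "act (g \<otimes>\<^bsub>G\<^esub> t \<otimes>\<^bsub>G\<^esub> inv\<^bsub>G\<^esub> g) x \<in> chart_dom act pu_of z_of s r g
       \<and> zc act pu_of z_of s r g j (act (g \<otimes>\<^bsub>G\<^esub> t \<otimes>\<^bsub>G\<^esub> inv\<^bsub>G\<^esub> g) x)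
           = chi act pu_of z_of s r g j (g \<otimes>\<^bsub>G\<^esub> t \<otimes>\<^bsub>G\<^esub> inv\<^bsub>G\<^esub> g) x * zc act pu_of z_of s r g j x
       \<and> chi act pu_of z_of s r g j (g \<otimes>\<^bsub>G\<^esub> t \<otimes>\<^bsub>G\<^esub> inv\<^bsub>G\<^esub> g) x * zc act pu_of z_of s r g j x
           = \<gamma> j t * zc act pu_of z_of s r g j x
       \<and> act (g \<otimes>\<^bsub>G\<^esub> u \<otimes>\<^bsub>G\<^esub> inv\<^bsub>G\<^esub> g) x \<in> chart_dom act pu_of z_of s r g
       \<and> zc act pu_of z_of s r g j (act (g \<otimes>\<^bsub>G\<^esub> u \<otimes>\<^bsub>G\<^esub> inv\<^bsub>G\<^esub> g) x) = zc act pu_of z_of s r g j x"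
proof -
  note LSu = LS[unfolded local_structure_def group_act_def]
  have grp: "group G" using LSu by (elim conjE) assumption
  have actX0: "\<forall>g\<in>carrier G. \<forall>x\<in>X. act g x \<in> X" using LSu by (elim conjE) assumption
  have act10: "\<forall>x\<in>X. act \<one>\<^bsub>G\<^esub> x = x" using LSu by (elim conjE) assumption
  have actm0: "\<forall>g\<in>carrier G. \<forall>h\<in>carrier G. \<forall>x\<in>X. act (g \<otimes>\<^bsub>G\<^esub> h) x = act g (act h x)"
    using LSu by (elim conjE) assumption
  have actX: "\<And>h y. h \<in> carrier G \<Longrightarrow> y \<in> X \<Longrightarrow> act h y \<in> X" using actX0 by blast
  have act1: "\<And>y. y \<in> X \<Longrightarrow> act \<one>\<^bsub>G\<^esub> y = y" using act10 by blast
  have actm: "\<And>a b y. a \<in> carrier G \<Longrightarrow> b \<in> carrier G \<Longrightarrow> y \<in> X \<Longrightarrow>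
      act (a \<otimes>\<^bsub>G\<^esub> b) y = act a (act b y)" using actm0 by blast
  have sG0: "subgroup G0 G" using LSu by (elim conjE) assumption
  have sT: "subgroup T G" using LSu by (elim conjE) assumption
  have sPu: "subgroup Pu G" using LSu by (elim conjE) assumption
  have G0G: "G0 \<subseteq> carrier G" by (rule subgroup.subset[OF sG0])
  have TG: "T \<subseteq> carrier G" by (rule subgroup.subset[OF sT])
  have PuG: "Pu \<subseteq> carrier G" by (rule subgroup.subset[OF sPu])
  have TL: "T \<subseteq> L" using LSu by (elim conjE) assumption
  have Puc0: "\<forall>l\<in>L. \<forall>u\<in>Pu. l \<otimes>\<^bsub>G\<^esub> u \<otimes>\<^bsub>G\<^esub> inv\<^bsub>G\<^esub> l \<in> Pu" using LSu by (elim conjE) assumption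
  have Puc: "\<And>l p. l \<in> L \<Longrightarrow> p \<in> Pu \<Longrightarrow> l \<otimes>\<^bsub>G\<^esub> p \<otimes>\<^bsub>G\<^esub> inv\<^bsub>G\<^esub> l \<in> Pu" using Puc0 by blast
  have Pum: "\<And>a b. a \<in> Pu \<Longrightarrow> b \<in> Pu \<Longrightarrow> a \<otimes>\<^bsub>G\<^esub> b \<in> Pu"
    by (rule subgroup.m_closed[OF sPu])
  have pub: "bij_betw pu_of (vecs s) Pu" using LSu by (elim conjE) assumption
  have zb: "bij_betw z_of (vecs r) (z_of ` vecs r)" using LSu by (elim conjE) assumption
  have zinj: "inj_on z_of (vecs r)" using zb by (simp add: bij_betw_def)
  have ZX: "z_of ` vecs r \<subseteq> X" using LSu by (elim conjE) assumption
  have pinj: "inj_on (\<lambda>(p, z). act p z) (Pu \<times> z_of ` vecs r)" using LSu by (elim conjE) assumption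
  have tact0: "\<forall>t\<in>T. \<forall>v\<in>vecs r. act t (z_of v) = z_of (\<lambda>j. if j < r then \<gamma> j t * v j else 0)"
    using LSu by (elim conjE) assumption
  have tact: "\<And>t v. t \<in> T \<Longrightarrow> v \<in> vecs r \<Longrightarrow> act t (z_of v) = z_of (\<lambda>j. if j < r then \<gamma> j t * v j else 0)"
    using tact0 by blast
  have gG: "g \<in> carrier G" using g G0G by (rule subsetD[rotated])
  have tG: "t \<in> carrier G" using t TG by (rule subsetD[rotated])
  have uG: "u \<in> carrier G" using u PuG by (rule subsetD[rotated])
  have pimg: "pu_of ` vecs s = Pu" using pub by (simp add: bij_betw_def)
  have pinj': "inj_on pu_of (vecs s)" using pub by (simp add: bij_betw_def)
  have pui: "\<And>q. q \<in> Pu \<Longrightarrow> \<exists>p\<in>vecs s. pu_of p = q"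
  proof -
    fix q assume "q \<in> Pu"
    hence "q \<in> pu_of ` vecs s" using pimg by simp
    thus "\<exists>p\<in>vecs s. pu_of p = q" by (auto simp del: pimg)
  qed
  have puin: "\<And>p. p \<in> vecs s \<Longrightarrow> pu_of p \<in> Pu"
  proof -
    fix p assume "p \<in> vecs s"
    hence "pu_of p \<in> pu_of ` vecs s" by (rule imageI)
    thus "pu_of p \<in> Pu" using pimg by simp
  qed
  have injc: "inj_on (chart act pu_of z_of s r g) (vecs (s + r))"
  proof (rule inj_onI)
    fix v1 v2 assume v1: "v1 \<in> vecs (s + r)" and v2: "v2 \<in> vecs (s + r)"
      and eq: "chart act pu_of z_of s r g v1 = chart act pu_of z_of s r g v2"
    define p1 where "p1 = (\<lambda>i. if i < s then v1 i else 0)"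
    define w1 where "w1 = (\<lambda>j. if j < r then v1 (s + j) else 0)"
    define p2 where "p2 = (\<lambda>i. if i < s then v2 i else 0)"
    define w2 where "w2 = (\<lambda>j. if j < r then v2 (s + j) else 0)"
    have d1: "v1 = comb s r p1 w1" "p1 \<in> vecs s" "w1 \<in> vecs r"
      using vecs_decomp[OF v1] unfolding p1_def w1_def by auto
    have d2: "v2 = comb s r p2 w2" "p2 \<in> vecs s" "w2 \<in> vecs r"
      using vecs_decomp[OF v2] unfolding p2_def w2_def by auto
    have a1X: "act (pu_of p1) (z_of w1) \<in> X" using actX puin d1 PuG ZX by blast
    have a2X: "act (pu_of p2) (z_of w2) \<in> X" using actX puin d2 PuG ZX by blast
    have e: "act g (act (pu_of p1) (z_of w1)) = act g (act (pu_of p2) (z_of w2))"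
      using eq unfolding chart_def p1_def w1_def p2_def w2_def .
    have bk: "\<And>y. y \<in> X \<Longrightarrow> act (inv\<^bsub>G\<^esub> g) (act g y) = y"
      using actm[of "inv\<^bsub>G\<^esub> g" g] grp gG act1 by (simp add: group.l_inv)
    have "act (pu_of p1) (z_of w1) = act (pu_of p2) (z_of w2)"
      using bk[OF a1X] bk[OF a2X] e by metis
    hence "(pu_of p1, z_of w1) = (pu_of p2, z_of w2)"
      using pinj puin d1 d2 by (auto simp: inj_on_def)
    hence "p1 = p2" "w1 = w2" using pinj' zinj d1 d2 by (auto simp: inj_on_def)
    thus "v1 = v2" using d1 d2 by simp
  qed
  have zc_comb: "\<And>p w. p \<in> vecs s \<Longrightarrow> w \<in> vecs r \<Longrightarrow>
      zc act pu_of z_of s r g j (act g (act (pu_of p) (z_of w))) = w j"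
  proof -
    fix p w assume p: "p \<in> vecs s" and w: "w \<in> vecs r"
    have "the_inv_into (vecs (s + r)) (chart act pu_of z_of s r g) (chart act pu_of z_of s r g (comb s r p w))
        = comb s r p w"
      by (rule the_inv_into_f_f[OF injc comb_vecs])
    thus "zc act pu_of z_of s r g j (act g (act (pu_of p) (z_of w))) = w j"
      using chart_comb[OF p w, where act=act and pu_of=pu_of and z_of=z_of and g=g] comb_j[OF j] by (simp add: zc_def)
  qed
  have dom_comb: "\<And>p w. p \<in> vecs s \<Longrightarrow> w \<in> vecs r \<Longrightarrow>
      act g (act (pu_of p) (z_of w)) \<in> chart_dom act pu_of z_of s r g"
  proof -
    fix p w assume p: "p \<in> vecs s" and w: "w \<in> vecs r"
    have "chart act pu_of z_of s r g (comb s r p w) \<in> chart act pu_of z_of s r g ` vecs (s + r)"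
      by (rule imageI[OF comb_vecs])
    thus "act g (act (pu_of p) (z_of w)) \<in> chart_dom act pu_of z_of s r g"
      unfolding chart_dom_def using chart_comb[OF p w, where act=act and pu_of=pu_of and z_of=z_of and g=g] by simp
  qed
  obtain v where v: "v \<in> vecs (s + r)" and xv: "x = chart act pu_of z_of s r g v"
    using x unfolding chart_dom_def by blast
  define p where "p = (\<lambda>i. if i < s then v i else 0)"
  define w where "w = (\<lambda>j. if j < r then v (s + j) else 0)"
  have p: "p \<in> vecs s" and w: "w \<in> vecs r" using vecs_decomp[OF v] unfolding p_def w_def by auto
  have xe: "x = act g (act (pu_of p) (z_of w))" using xv unfolding chart_def p_def w_def .
  have puG: "pu_of p \<in> carrier G" using puin[OF p] PuG by blast
  have zX: "z_of w \<in> X" using ZX w by blast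
  have yX: "act (pu_of p) (z_of w) \<in> X" using actX puG zX by blast
  have zcx: "zc act pu_of z_of s r g j x = w j" using zc_comb[OF p w] xe by simp
  have conj: "\<And>h y. h \<in> carrier G \<Longrightarrow> y \<in> X \<Longrightarrow>
      act (g \<otimes>\<^bsub>G\<^esub> h \<otimes>\<^bsub>G\<^esub> inv\<^bsub>G\<^esub> g) (act g y) = act g (act h y)"
  proof -
    fix h y assume h: "h \<in> carrier G" and y: "y \<in> X"
    have "act (g \<otimes>\<^bsub>G\<^esub> h \<otimes>\<^bsub>G\<^esub> inv\<^bsub>G\<^esub> g) (act g y) = act (g \<otimes>\<^bsub>G\<^esub> h \<otimes>\<^bsub>G\<^esub> inv\<^bsub>G\<^esub> g \<otimes>\<^bsub>G\<^esub> g) y"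
      using actm grp gG h y by (simp add: group.inv_closed monoid.m_closed group.is_monoid)
    also have "g \<otimes>\<^bsub>G\<^esub> h \<otimes>\<^bsub>G\<^esub> inv\<^bsub>G\<^esub> g \<otimes>\<^bsub>G\<^esub> g = g \<otimes>\<^bsub>G\<^esub> h"
      using grp gG h by (simp add: group.inv_closed monoid.m_closed group.is_monoid monoid.m_assoc group.l_inv)
    also have "act (g \<otimes>\<^bsub>G\<^esub> h) y = act g (act h y)" using actm gG h y by blast
    finally show "act (g \<otimes>\<^bsub>G\<^esub> h \<otimes>\<^bsub>G\<^esub> inv\<^bsub>G\<^esub> g) (act g y) = act g (act h y)" .
  qed
  have tL: "t \<in> L" using t TL by blast
  have q: "t \<otimes>\<^bsub>G\<^esub> pu_of p \<otimes>\<^bsub>G\<^esub> inv\<^bsub>G\<^esub> t \<in> Pu" using Puc[OF tL puin[OF p]] .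
  then obtain p' where p': "p' \<in> vecs s" and pp': "pu_of p' = t \<otimes>\<^bsub>G\<^esub> pu_of p \<otimes>\<^bsub>G\<^esub> inv\<^bsub>G\<^esub> t"
    using pui by blast
  define w' where "w' = (\<lambda>j. if j < r then \<gamma> j t * w j else 0)"
  have w': "w' \<in> vecs r" by (simp add: w'_def vecs_def)
  have "act t (act (pu_of p) (z_of w)) = act (t \<otimes>\<^bsub>G\<^esub> pu_of p \<otimes>\<^bsub>G\<^esub> inv\<^bsub>G\<^esub> t \<otimes>\<^bsub>G\<^esub> t) (z_of w)"
  proof -
    have "t \<otimes>\<^bsub>G\<^esub> pu_of p \<otimes>\<^bsub>G\<^esub> inv\<^bsub>G\<^esub> t \<otimes>\<^bsub>G\<^esub> t = t \<otimes>\<^bsub>G\<^esub> pu_of p"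
      using grp tG puG by (simp add: group.inv_closed monoid.m_closed group.is_monoid monoid.m_assoc group.l_inv)
    thus ?thesis using actm tG puG zX by simp
  qed
  also have "\<dots> = act (pu_of p') (act t (z_of w))"
    using actm[of "t \<otimes>\<^bsub>G\<^esub> pu_of p \<otimes>\<^bsub>G\<^esub> inv\<^bsub>G\<^esub> t" t "z_of w"] pp' q PuG tG zX by auto
  also have "\<dots> = act (pu_of p') (z_of w')" using tact[OF t w] w'_def by simp
  finally have ta: "act t (act (pu_of p) (z_of w)) = act (pu_of p') (z_of w')" .
  have A: "act (g \<otimes>\<^bsub>G\<^esub> t \<otimes>\<^bsub>G\<^esub> inv\<^bsub>G\<^esub> g) x = act g (act (pu_of p') (z_of w'))"
    using conj[OF tG yX] ta xe by simp
  have A1: "act (g \<otimes>\<^bsub>G\<^esub> t \<otimes>\<^bsub>G\<^esub> inv\<^bsub>G\<^esub> g) x \<in> chart_dom act pu_of z_of s r g"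
    using A dom_comb[OF p' w'] by simp
  have A2: "zc act pu_of z_of s r g j (act (g \<otimes>\<^bsub>G\<^esub> t \<otimes>\<^bsub>G\<^esub> inv\<^bsub>G\<^esub> g) x) = \<gamma> j t * w j"
    using A zc_comb[OF p' w'] j w'_def by simp
  have A3: "chi act pu_of z_of s r g j (g \<otimes>\<^bsub>G\<^esub> t \<otimes>\<^bsub>G\<^esub> inv\<^bsub>G\<^esub> g) x * zc act pu_of z_of s r g j x
      = \<gamma> j t * w j"
    unfolding chi_def using A2 zcx by (cases "w j = 0") auto
  have q2: "u \<otimes>\<^bsub>G\<^esub> pu_of p \<in> Pu" using Pum[OF u puin[OF p]] .
  then obtain p'' where p'': "p'' \<in> vecs s" and pp'': "pu_of p'' = u \<otimes>\<^bsub>G\<^esub> pu_of p"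
    using pui by blast
  have B: "act (g \<otimes>\<^bsub>G\<^esub> u \<otimes>\<^bsub>G\<^esub> inv\<^bsub>G\<^esub> g) x = act g (act (pu_of p'') (z_of w))"
    using conj[OF uG yX] xe actm[OF uG puG zX] pp'' by simp
  have B1: "act (g \<otimes>\<^bsub>G\<^esub> u \<otimes>\<^bsub>G\<^esub> inv\<^bsub>G\<^esub> g) x \<in> chart_dom act pu_of z_of s r g"
    using B dom_comb[OF p'' w] by simp
  have B2: "zc act pu_of z_of s r g j (act (g \<otimes>\<^bsub>G\<^esub> u \<otimes>\<^bsub>G\<^esub> inv\<^bsub>G\<^esub> g) x) = zc act pu_of z_of s r g j x"
    using B zc_comb[OF p'' w] zcx by simp
  show ?thesis using A1 A2 A3 B1 B2 zcx by (simp only:)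
qed

end
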